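(* Let $\mathcal{H}=(\mathcal{V},\mathcal{E},\mu,\{w_e\})$ be a submodular hypergraph with $\mathcal{V}=[N]$, and let $\mathcal{G}$ be a directed graph with vertex set $\mathcal{V}_\mathcal{G}=\mathcal{V}\cup\bar{\mathcal{V}}$, where $\bar{\mathcal{V}}$ is a set of $M$ auxiliary vertices disjoint from $\mathcal{V}$, and nonnegative weighted adjacency matrix $\mathbf{A}$. Then the following two statements are equivalent: (i) $\mathrm{cut}_{\mathcal{H}}(\mathcal{S})=\min_{\mathcal{T}\subseteq\bar{\mathcal{V}}}\mathrm{cut}_{\mathcal{G}}(\mathcal{S}\cup\mathcal{T})$ for all $\mathcal{S}\subseteq\mathcal{V}$; (ii) $Q_1(\mathbf{x})=\min_{\bar{\mathbf{x}}\in\mathbb{R}^M}Q_1^{(g)}(\mathbf{y})$ for all $\mathbf{x}\in\mathbb{R}^N$, where $\mathbf{y}\in\mathbb{R}^{N+M}$ has $\mathbf{y}_{\mathcal{V}}=\mathbf{x}$ and $\mathbf{y}_{\bar{\mathcal{V}}}=\bar{\mathbf{x}}$.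
   Context: Lovász extension: for a set function $F:2^{[n]}\to\mathbb{R}$ with $F(\emptyset)=0$, and $\mathbf{x}\in\mathbb{R}^n$ with entries sorted as $x_{i_1}\ge\cdots\ge x_{i_n}$, $f(\mathbf{x})=\sum_{j=1}^{n-1}F(\{i_1,\dots,i_j\})(x_{i_j}-x_{i_{j+1}})+F([n])x_{i_n}$. A submodular hypergraph $\mathcal{H}=(\mathcal{V},\mathcal{E},\mu,\{w_e\})$ has vertex set $\mathcal{V}=[N]$, a set $\mathcal{E}$ of hyperedges $e\subseteq\mathcal{V}$, positive vertex weights $\mu$, and for each $e$ a splitting function $w_e:2^e\to\mathbb{R}_{\ge0}$ that is submodular, symmetric ($w_e(\mathcal{S})=w_e(e\setminus\mathcal{S})$) and satisfies $w_e(\emptyset)=0$; it is extended to $2^{\mathcal{V}}$ by $w_e(\mathcal{S})=w_e(\mathcal{S}\cap e)$. The hypergraph cut function is $\mathrm{cut}_{\mathcal{H}}(\mathcal{S})=\sum_{e\in\mathcal{E}}w_e(\mathcal{S})$, and $Q_1:\mathbb{R}^N\to\mathbb{R}$ is its Lovász extension (equivalently $Q_1(\mathbf{x})=\sum_{e}\vartheta_e f_e(\mathbf{x})$ with $\vartheta_e=\max_{\mathcal{S}\subseteq e}w_e(\mathcal{S})$ and $f_e$ the Lovász extension of $\vartheta_e^{-1}w_e$). For a directed graph with vertex set $\mathcal{V}_\mathcal{G}$ and nonnegative adjacency matrix $\mathbf{A}$ ($A_{uv}$ = weight of edge $u\to v$), $\mathrm{cut}_\mathcal{G}(\mathcal{S})=\sum_{u\in\mathcal{S},v\in\mathcal{V}_\mathcal{G}\setminus\mathcal{S}}A_{uv}$,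 and its Lovász extension is $Q_1^{(g)}(\mathbf{y})=\sum_{u,v\in\mathcal{V}_\mathcal{G}}A_{uv}\max\{y_u-y_v,0\}$. *)

theory Defs
  imports Main "HOL-Library.Library"
begin

text \<open>Ground sets are initial segments {..<n} of nat (0-indexed version of [n]).
  A decreasing sorting permutation of x on {..<n}.\<close>
definition sorting_perm :: "nat \<Rightarrow> (nat \<Rightarrow> real) \<Rightarrow> (nat \<Rightarrow> nat) \<Rightarrow> bool" where
  "sorting_perm n x \<sigma> \<longleftrightarrow> bij_betw \<sigma> {..<n} {..<n} \<and>
     (\<forall>i j. i < j \<and> j < n \<longrightarrow> x (\<sigma> j) \<le> x (\<sigma> i))"

definition lovasz_ext :: "nat \<Rightarrow> (nat set \<Rightarrow> real) \<Rightarrow> (nat \<Rightarrow> real) \<Rightarrow> real" where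
  "lovasz_ext n F x = (let \<sigma> = (SOME \<sigma>. sorting_perm n x \<sigma>) in
     (\<Sum>j<n - 1. F (\<sigma> ` {..j}) * (x (\<sigma> j) - x (\<sigma> (Suc j))))
     + F {..<n} * x (\<sigma> (n - 1)))"

definition submodular_on :: "nat set \<Rightarrow> (nat set \<Rightarrow> real) \<Rightarrow> bool" where
  "submodular_on e F \<longleftrightarrow> (\<forall>S T. S \<subseteq> e \<longrightarrow> T \<subseteq> e \<longrightarrow> F (S \<union> T) + F (S \<inter> T) \<le> F S + F T)"

definition submodular_hypergraph ::
  "nat \<Rightarrow> nat set set \<Rightarrow> (nat \<Rightarrow> real) \<Rightarrow> (nat set \<Rightarrow> nat set \<Rightarrow> real) \<Rightarrow> bool" where
  "submodular_hypergraph N E mu w \<longleftrightarrow>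
     (\<forall>e\<in>E. e \<subseteq> {..<N}) \<and> (\<forall>v<N. mu v > 0) \<and>
     (\<forall>e\<in>E. (\<forall>S\<subseteq>e. w e S \<ge> 0) \<and> submodular_on e (w e) \<and>
             (\<forall>S\<subseteq>e. w e S = w e (e - S)) \<and> w e {} = 0)"

text \<open>w_e extended to 2^V by w_e(S) = w_e(S \<inter> e).\<close>
definition hcut :: "nat set set \<Rightarrow> (nat set \<Rightarrow> nat set \<Rightarrow> real) \<Rightarrow> nat set \<Rightarrow> real" where
  "hcut E w S = (\<Sum>e\<in>E. w e (S \<inter> e))"

definition hQ1 :: "nat \<Rightarrow> nat set set \<Rightarrow> (nat set \<Rightarrow> nat set \<Rightarrow> real) \<Rightarrow> (nat \<Rightarrow> real) \<Rightarrow> real" where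
  "hQ1 N E w x = lovasz_ext N (hcut E w) x"

definition gcut :: "nat set \<Rightarrow> (nat \<Rightarrow> nat \<Rightarrow> real) \<Rightarrow> nat set \<Rightarrow> real" where
  "gcut VG A S = (\<Sum>u\<in>S. \<Sum>v\<in>VG - S. A u v)"

definition gQ1 :: "nat set \<Rightarrow> (nat \<Rightarrow> nat \<Rightarrow> real) \<Rightarrow> (nat \<Rightarrow> real) \<Rightarrow> real" where
  "gQ1 VG A y = (\<Sum>u\<in>VG. \<Sum>v\<in>VG. A u v * max (y u - y v) 0)"

end

theory Submission
  imports Defs
begin

definition canon :: "nat set \<Rightarrow> (nat set \<Rightarrow> real) \<Rightarrow> (nat \<Rightarrow> real) \<Rightarrow> real" where
  "canon U F y = (\<Sum>t\<in>y ` U. t * (F {u\<in>U. t \<le> y u} - F {u\<in>U. t < y u}))"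

lemma canon_superset:
  assumes "finite Y" "y ` U \<subseteq> Y"
  shows "canon U F y = (\<Sum>t\<in>Y. t * (F {u\<in>U. t \<le> y u} - F {u\<in>U. t < y u}))"
  unfolding canon_def
proof (rule sum.mono_neutral_left[OF assms(1) assms(2)])
  show "\<forall>t\<in>Y - y ` U. t * (F {u \<in> U. t \<le> y u} - F {u \<in> U. t < y u}) = 0"
  proof
    fix t assume "t \<in> Y - y ` U"
    hence "{u \<in> U. t \<le> y u} = {u \<in> U. t < y u}" by force
    thus "t * (F {u \<in> U. t \<le> y u} - F {u \<in> U. t < y u}) = 0" by simp
  qed
qed

lemma canon_cong:
  assumes "\<And>u. u \<in> U \<Longrightarrow> y u = z u"
  shows "canon U F y = canon U F z"
proof -
  have "y ` U = z ` U" using assms by force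
  moreover have "\<And>t. {u\<in>U. t \<le> y u} = {u\<in>U. t \<le> z u}" "\<And>t. {u\<in>U. t < y u} = {u\<in>U. t < z u}"
    using assms by auto
  ultimately show ?thesis unfolding canon_def by simp
qed

lemma canon_restrict:
  assumes "finite W" "U \<subseteq> W"
  shows "canon W (\<lambda>S. F (S \<inter> U)) y = canon U F y"
proof -
  have fin: "finite U" using assms finite_subset by blast
  have "canon W (\<lambda>S. F (S \<inter> U)) y = (\<Sum>t\<in>y ` W. t * (F {u\<in>U. t \<le> y u} - F {u\<in>U. t < y u}))"
    unfolding canon_def
  proof (rule sum.cong[OF refl])
    fix t
    have "{u\<in>W. t \<le> y u} \<inter> U = {u\<in>U. t \<le> y u}" "{u\<in>W. t < y u} \<inter> U = {u\<in>U. t < y u}"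
      using assms(2) by auto
    thus "t * (F ({u\<in>W. t \<le> y u} \<inter> U) - F ({u\<in>W. t < y u} \<inter> U)) = t * (F {u\<in>U. t \<le> y u} - F {u\<in>U. t < y u})"
      by simp
  qed
  also have "\<dots> = canon U F y"
    by (rule canon_superset[symmetric], use assms in auto)
  finally show ?thesis .
qed

lemma canon_remove_min:
  assumes "finite U" "m \<in> U" "\<And>u. u \<in> U \<Longrightarrow> y m \<le> y u"
  shows "canon U F y = canon (U - {m}) F y + y m * (F U - F (U - {m}))"
proof -
  let ?U' = "U - {m}"
  have gt: "\<And>t. y m < t \<Longrightarrow> {u\<in>U. t \<le> y u} = {u\<in>?U'. t \<le> y u} \<and> {u\<in>U. t < y u} = {u\<in>?U'. t < y u}"
    by auto
  have all: "{u\<in>U. y m \<le> y u} = U" using assms by auto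
  have gtm: "{u\<in>U. y m < y u} = {u\<in>?U'. y m < y u}" by auto
  show ?thesis
  proof (cases "y m \<in> y ` ?U'")
    case True
    have im: "y ` U = y ` ?U'" using True assms(2) by blast
    have all': "{u\<in>?U'. y m \<le> y u} = ?U'" using assms by auto
    have "canon U F y = y m * (F U - F {u\<in>U. y m < y u}) +
        (\<Sum>t\<in>y ` ?U' - {y m}. t * (F {u\<in>U. t \<le> y u} - F {u\<in>U. t < y u}))"
      unfolding canon_def im using assms(1) True
      by (subst sum.remove[of _ "y m"]) (simp_all only: all finite_imageI finite_Diff)
    moreover have "canon ?U' F y = y m * (F ?U' - F {u\<in>?U'. y m < y u}) +
        (\<Sum>t\<in>y ` ?U' - {y m}. t * (F {u\<in>?U'. t \<le> y u} - F {u\<in>?U'. t < y u}))"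
      unfolding canon_def using assms(1) True
      by (subst sum.remove[of _ "y m"]) (simp_all only: all' finite_imageI finite_Diff)
    moreover have "(\<Sum>t\<in>y ` ?U' - {y m}. t * (F {u\<in>U. t \<le> y u} - F {u\<in>U. t < y u}))
       = (\<Sum>t\<in>y ` ?U' - {y m}. t * (F {u\<in>?U'. t \<le> y u} - F {u\<in>?U'. t < y u}))"
    proof (rule sum.cong[OF refl])
      fix t assume "t \<in> y ` ?U' - {y m}"
      hence "y m < t" using assms(3) by force
      thus "t * (F {u\<in>U. t \<le> y u} - F {u\<in>U. t < y u}) = t * (F {u\<in>?U'. t \<le> y u} - F {u\<in>?U'. t < y u})"
        using gt by simp
    qed
    ultimately show ?thesis using gtm by (simp add: algebra_simps)
  next
    case False
    have im: "y ` U = insert (y m) (y ` ?U')" using assms(2) by blast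
    have gtm': "{u\<in>U. y m < y u} = ?U'" using False assms(3) by (auto simp: order_le_less)
    have "canon U F y = y m * (F U - F ?U') +
        (\<Sum>t\<in>y ` ?U'. t * (F {u\<in>U. t \<le> y u} - F {u\<in>U. t < y u}))"
      unfolding canon_def im using assms(1) False by (simp add: all gtm')
    moreover have "(\<Sum>t\<in>y ` ?U'. t * (F {u\<in>U. t \<le> y u} - F {u\<in>U. t < y u})) = canon ?U' F y"
      unfolding canon_def
    proof (rule sum.cong[OF refl])
      fix t assume "t \<in> y ` ?U'"
      hence "y m < t" using assms(3) False by (metis Diff_iff imageE imageI order_le_less)
      thus "t * (F {u\<in>U. t \<le> y u} - F {u\<in>U. t < y u}) = t * (F {u\<in>?U'. t \<le> y u} - F {u\<in>?U'. t < y u})"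
        using gt by simp
    qed
    ultimately show ?thesis by simp
  qed
qed

definition lsum :: "nat \<Rightarrow> nat set \<Rightarrow> (nat set \<Rightarrow> real) \<Rightarrow> (nat \<Rightarrow> real) \<Rightarrow> (nat \<Rightarrow> nat) \<Rightarrow> real" where
  "lsum n U F y \<sigma> = (\<Sum>j<n - 1. F (\<sigma> ` {..j}) * (y (\<sigma> j) - y (\<sigma> (Suc j)))) + F U * y (\<sigma> (n - 1))"

lemma lsum_canon:
  assumes "bij_betw \<sigma> {..<n} U" "\<forall>i j. i < j \<and> j < n \<longrightarrow> y (\<sigma> j) \<le> y (\<sigma> i)" "F {} = 0"
  shows "lsum n U F y \<sigma> = canon U F y"
  using assms(1,2)
proof (induction n arbitrary: U)
  case 0
  hence "U = {}" by (simp add: bij_betw_def)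
  thus ?case by (simp add: lsum_def canon_def assms(3))
next
  case (Suc k)
  let ?m = "\<sigma> k"
  let ?U' = "U - {?m}"
  have inj: "inj_on \<sigma> {..<Suc k}" and img: "\<sigma> ` {..<Suc k} = U" using Suc.prems(1) by (auto simp: bij_betw_def)
  have img': "\<sigma> ` {..<k} = ?U'"
  proof -
    have "\<sigma> ` ({..<Suc k} - {k}) = \<sigma> ` {..<Suc k} - \<sigma> ` {k}"
      by (rule inj_on_image_set_diff[OF inj]) auto
    moreover have "{..<Suc k} - {k} = {..<k}" by auto
    ultimately show ?thesis using img by simp
  qed
  have bij': "bij_betw \<sigma> {..<k} ?U'"
    unfolding bij_betw_def using img' inj by (auto intro: inj_on_subset)
  have IH: "lsum k ?U' F y \<sigma> = canon ?U' F y"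
    using Suc.IH[OF bij'] Suc.prems(2) by auto
  have finU: "finite U" using img by auto
  have mU: "?m \<in> U" using img by auto
  have mmin: "\<And>u. u \<in> U \<Longrightarrow> y ?m \<le> y u"
  proof -
    fix u assume "u \<in> U"
    then obtain i where "i < Suc k" "u = \<sigma> i" using img by auto
    thus "y ?m \<le> y u" using Suc.prems(2) by (cases "i = k") auto
  qed
  have C: "canon U F y = canon ?U' F y + y ?m * (F U - F ?U')"
    using canon_remove_min[of U ?m y F] finU mU mmin by blast
  have L: "lsum (Suc k) U F y \<sigma> = lsum k ?U' F y \<sigma> + y ?m * (F U - F ?U')"
  proof (cases k)
    case 0
    hence "?U' = {}" using img' by auto
    thus ?thesis using 0 by (simp add: lsum_def assms(3) algebra_simps)
  next
    case (Suc k')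
    have "\<sigma> ` {..k'} = ?U'" using img' Suc by (simp add: lessThan_Suc_atMost)
    thus ?thesis using Suc by (simp add: lsum_def algebra_simps)
  qed
  show ?case using L IH C by simp
qed

lemma sp_exists: "\<exists>\<sigma>. sorting_perm n x \<sigma>"
proof -
  define xs where "xs = sort_key (\<lambda>i. - x i) [0..<n]"
  have len: "length xs = n" and st: "set xs = {..<n}" and d: "distinct xs"
    by (auto simp: xs_def)
  have bij: "bij_betw ((!) xs) {..<n} {..<n}"
    by (rule bij_betw_nth) (use len st d in auto)
  have srt: "List.sorted (map (\<lambda>i. - x i) xs)" by (simp add: xs_def)
  have "\<forall>i j. i < j \<and> j < n \<longrightarrow> x (xs ! j) \<le> x (xs ! i)"
  proof (intro allI impI)
    fix i j assume "i < j \<and> j < n"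
    hence "map (\<lambda>i. - x i) xs ! i \<le> map (\<lambda>i. - x i) xs ! j"
      using srt len unfolding List.sorted_iff_nth_mono by auto
    thus "x (xs ! j) \<le> x (xs ! i)" using \<open>i < j \<and> j < n\<close> len by simp
  qed
  thus ?thesis using bij unfolding sorting_perm_def by blast
qed

lemma pair_sum:
  fixes Y :: "real set"
  assumes "finite Y" "a \<in> Y" "b \<in> Y"
  shows "(\<Sum>t\<in>Y. t * ((if b < t \<and> t \<le> a then 1 else 0) - (if b \<le> t \<and> t < a then 1 else 0))) = max (a - b) 0"
proof -
  have "(\<Sum>t\<in>Y. t * ((if b < t \<and> t \<le> a then 1 else 0) - (if b \<le> t \<and> t < a then 1 else 0)))
     = (\<Sum>t\<in>Y. if b < t \<and> t \<le> a then t else 0) - (\<Sum>t\<in>Y. if b \<le> t \<and> t < a then t else 0)"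
    by (simp add: sum_subtractf[symmetric] algebra_simps) (rule sum.cong, auto)
  also have "\<dots> = sum (\<lambda>t. t) {t\<in>Y. b < t \<and> t \<le> a} - sum (\<lambda>t. t) {t\<in>Y. b \<le> t \<and> t < a}"
    using assms(1) by (simp add: sum.inter_filter)
  also have "\<dots> = max (a - b) 0"
  proof (cases "b < a")
    case True
    let ?I = "{t\<in>Y. b < t \<and> t < a}"
    have "{t\<in>Y. b < t \<and> t \<le> a} = insert a ?I" using True assms by auto
    moreover have "{t\<in>Y. b \<le> t \<and> t < a} = insert b ?I" using True assms by auto
    moreover have "finite ?I" using assms(1) by simp
    ultimately show ?thesis using True by simp
  next
    case False
    hence e1: "{t\<in>Y. b < t \<and> t \<le> a} = {}" and e2: "{t\<in>Y. b \<le> t \<and> t < a} = {}" by auto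
    show ?thesis unfolding e1 e2 using False by simp
  qed
  finally show ?thesis .
qed

lemma gcut_alt:
  assumes "finite VG" "S \<subseteq> VG"
  shows "gcut VG A S = (\<Sum>u\<in>VG. \<Sum>v\<in>VG. A u v * (if u \<in> S \<and> v \<notin> S then 1 else 0))"
proof -
  have "gcut VG A S = (\<Sum>u\<in>VG \<inter> S. \<Sum>v\<in>VG \<inter> - S. A u v)"
    unfolding gcut_def using assms(2) by (simp add: Int_absorb1 Diff_eq)
  also have "\<dots> = (\<Sum>u\<in>VG. if u \<in> S then (\<Sum>v\<in>VG. if v \<in> - S then A u v else 0) else 0)"
    using assms(1) by (simp only: sum.inter_restrict)
  also have "\<dots> = (\<Sum>u\<in>VG. \<Sum>v\<in>VG. A u v * (if u \<in> S \<and> v \<notin> S then 1 else 0))"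
    by (intro sum.cong refl) (auto intro: sum.cong)
  finally show ?thesis .
qed

lemma gQ1_canon:
  assumes "finite VG"
  shows "gQ1 VG A y = canon VG (gcut VG A) y"
proof -
  let ?Y = "y ` VG"
  have "canon VG (gcut VG A) y = (\<Sum>t\<in>?Y. t * (
      (\<Sum>u\<in>VG. \<Sum>v\<in>VG. A u v * (if u \<in> {u\<in>VG. t \<le> y u} \<and> v \<notin> {u\<in>VG. t \<le> y u} then 1 else 0)) -
      (\<Sum>u\<in>VG. \<Sum>v\<in>VG. A u v * (if u \<in> {u\<in>VG. t < y u} \<and> v \<notin> {u\<in>VG. t < y u} then 1 else 0))))"
    unfolding canon_def using assms by (simp add: gcut_alt)
  also have "\<dots> = (\<Sum>t\<in>?Y. \<Sum>u\<in>VG. \<Sum>v\<in>VG. A u v *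
      (t * ((if y v < t \<and> t \<le> y u then 1 else 0) - (if y v \<le> t \<and> t < y u then 1 else 0))))"
  proof (rule sum.cong[OF refl])
    fix t
    show "t * ((\<Sum>u\<in>VG. \<Sum>v\<in>VG. A u v * (if u \<in> {u\<in>VG. t \<le> y u} \<and> v \<notin> {u\<in>VG. t \<le> y u} then 1 else 0)) -
      (\<Sum>u\<in>VG. \<Sum>v\<in>VG. A u v * (if u \<in> {u\<in>VG. t < y u} \<and> v \<notin> {u\<in>VG. t < y u} then 1 else 0)))
      = (\<Sum>u\<in>VG. \<Sum>v\<in>VG. A u v * (t * ((if y v < t \<and> t \<le> y u then 1 else 0) - (if y v \<le> t \<and> t < y u then 1 else 0))))"
      by (simp add: sum_subtractf[symmetric] sum_distrib_left algebra_simps not_le not_less conj_commute)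
  qed
  also have "\<dots> = (\<Sum>u\<in>VG. \<Sum>v\<in>VG. A u v * (\<Sum>t\<in>?Y.
      (t * ((if y v < t \<and> t \<le> y u then 1 else 0) - (if y v \<le> t \<and> t < y u then 1 else 0)))))"
    by (subst sum.swap) (simp add: sum.swap[of _ ?Y] sum_distrib_left)
  also have "\<dots> = (\<Sum>u\<in>VG. \<Sum>v\<in>VG. A u v * max (y u - y v) 0)"
    using assms by (intro sum.cong refl) (simp add: pair_sum)
  finally show ?thesis unfolding gQ1_def by simp
qed

lemma gcut_empty: "gcut VG A {} = 0" by (simp add: gcut_def)
lemma gcut_all: "gcut VG A VG = 0" by (simp add: gcut_def)

lemma gcut_nonneg:
  assumes "S \<subseteq> VG" "\<forall>u\<in>VG. \<forall>v\<in>VG. A u v \<ge> 0"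
  shows "gcut VG A S \<ge> 0"
  unfolding gcut_def using assms by (intro sum_nonneg) auto

lemma gcut_submod:
  assumes "finite VG" "X \<subseteq> VG" "Y \<subseteq> VG" "\<forall>u\<in>VG. \<forall>v\<in>VG. A u v \<ge> 0"
  shows "gcut VG A (X \<union> Y) + gcut VG A (X \<inter> Y) \<le> gcut VG A X + gcut VG A Y"
proof -
  have XY: "X \<union> Y \<subseteq> VG" "X \<inter> Y \<subseteq> VG" using assms by auto
  have "gcut VG A (X \<union> Y) + gcut VG A (X \<inter> Y) = (\<Sum>u\<in>VG. \<Sum>v\<in>VG. A u v *
     ((if u \<in> X \<union> Y \<and> v \<notin> X \<union> Y then 1 else 0) + (if u \<in> X \<inter> Y \<and> v \<notin> X \<inter> Y then 1 else 0)))"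
    using assms XY by (simp add: gcut_alt sum.distrib[symmetric] distrib_left)
  also have "\<dots> \<le> (\<Sum>u\<in>VG. \<Sum>v\<in>VG. A u v *
     ((if u \<in> X \<and> v \<notin> X then 1 else 0) + (if u \<in> Y \<and> v \<notin> Y then 1 else 0)))"
  proof (intro sum_mono mult_left_mono)
    fix u v assume "u \<in> VG" "v \<in> VG"
    thus "0 \<le> A u v" using assms by auto
    show "(if u \<in> X \<union> Y \<and> v \<notin> X \<union> Y then 1 else 0) + (if u \<in> X \<inter> Y \<and> v \<notin> X \<inter> Y then 1 else 0)
       \<le> (if u \<in> X \<and> v \<notin> X then 1 else 0) + (if u \<in> Y \<and> v \<notin> Y then (1::real) else 0)"
      by auto
  qed
  also have "\<dots> = gcut VG A X + gcut VG A Y"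
    using assms by (simp add: gcut_alt sum.distrib[symmetric] distrib_left)
  finally show ?thesis .
qed

lemma hg_edge:
  assumes "submodular_hypergraph N E mu w" "e \<in> E"
  shows "e \<subseteq> {..<N}" "w e {} = 0" "\<forall>S\<subseteq>e. w e S = w e (e - S)"
proof -
  have C: "\<forall>e\<in>E. (\<forall>S\<subseteq>e. w e S \<ge> 0) \<and> submodular_on e (w e) \<and>
             (\<forall>S\<subseteq>e. w e S = w e (e - S)) \<and> w e {} = 0"
    using assms(1) unfolding submodular_hypergraph_def by (rule conjunct2[THEN conjunct2])
  have D: "\<forall>e\<in>E. e \<subseteq> {..<N}"
    using assms(1) unfolding submodular_hypergraph_def by (rule conjunct1)
  show "e \<subseteq> {..<N}" using D assms(2) by (rule bspec)
  have Ce: "(\<forall>S\<subseteq>e. w e S \<ge> 0) \<and> submodular_on e (w e) \<and>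
             (\<forall>S\<subseteq>e. w e S = w e (e - S)) \<and> w e {} = 0" using C assms(2) by (rule bspec)
  show "w e {} = 0" using Ce by (rule conjunct2[THEN conjunct2, THEN conjunct2])
  show "\<forall>S\<subseteq>e. w e S = w e (e - S)" using Ce by (rule conjunct2[THEN conjunct2, THEN conjunct1])
qed

lemma hcut_empty:
  assumes "submodular_hypergraph N E mu w"
  shows "hcut E w {} = 0"
  unfolding hcut_def using hg_edge(2)[OF assms] by simp

lemma hcut_all:
  assumes "submodular_hypergraph N E mu w"
  shows "hcut E w {..<N} = 0"
  unfolding hcut_def
proof (rule sum.neutral, rule ballI)
  fix e assume e: "e \<in> E"
  have sub: "e \<subseteq> {..<N}" and z: "w e {} = 0" using hg_edge(1,2)[OF assms e] by auto
  have sym: "w e e = w e (e - e)" using hg_edge(3)[OF assms e] by blast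
  have "{..<N} \<inter> e = e" using sub by auto
  thus "w e ({..<N} \<inter> e) = 0" using sym z by simp
qed

lemma hQ1_canon:
  assumes "submodular_hypergraph N E mu w"
  shows "hQ1 N E w x = canon {..<N} (hcut E w) x"
proof -
  define \<sigma> where "\<sigma> = (SOME \<sigma>. sorting_perm N x \<sigma>)"
  have sp: "sorting_perm N x \<sigma>" unfolding \<sigma>_def using someI_ex[OF sp_exists] .
  have "hQ1 N E w x = lsum N {..<N} (hcut E w) x \<sigma>"
    unfolding hQ1_def lovasz_ext_def lsum_def \<sigma>_def Let_def by simp
  also have "\<dots> = canon {..<N} (hcut E w) x"
    using sp hcut_empty[OF assms] unfolding sorting_perm_def by (intro lsum_canon) auto
  finally show ?thesis .
qed

lemma lsum_mono:
  assumes "\<forall>i j. i < j \<and> j < n \<longrightarrow> y (\<sigma> j) \<le> y (\<sigma> i)"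
    and "\<And>j. j < n - 1 \<Longrightarrow> F1 (\<sigma> ` {..j}) \<le> F2 (\<sigma> ` {..j})"
    and "F1 U = F2 U"
  shows "lsum n U F1 y \<sigma> \<le> lsum n U F2 y \<sigma>"
proof -
  have "(\<Sum>j<n - 1. F1 (\<sigma> ` {..j}) * (y (\<sigma> j) - y (\<sigma> (Suc j))))
     \<le> (\<Sum>j<n - 1. F2 (\<sigma> ` {..j}) * (y (\<sigma> j) - y (\<sigma> (Suc j))))"
  proof (rule sum_mono)
    fix j assume "j \<in> {..<n - 1}"
    thus "F1 (\<sigma> ` {..j}) * (y (\<sigma> j) - y (\<sigma> (Suc j))) \<le> F2 (\<sigma> ` {..j}) * (y (\<sigma> j) - y (\<sigma> (Suc j)))"
      using assms(1,2) by (intro mult_right_mono) auto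
  qed
  thus ?thesis unfolding lsum_def using assms(3) by simp
qed

lemma lower_bound:
  fixes N M :: nat and F :: "nat set \<Rightarrow> real"
  assumes Fle: "\<forall>S\<subseteq>{..<N}. \<forall>T\<subseteq>{N..<N+M}. F S \<le> gcut {..<N+M} A (S \<union> T)"
    and F0: "F {} = 0" and FV: "F {..<N} = 0"
  shows "canon {..<N} F z \<le> gQ1 {..<N+M} A z"
proof -
  let ?VG = "{..<N+M}"
  obtain \<tau> where sp: "sorting_perm (N+M) z \<tau>" using sp_exists by blast
  have bij: "bij_betw \<tau> ?VG ?VG" and srt: "\<forall>i j. i < j \<and> j < N+M \<longrightarrow> z (\<tau> j) \<le> z (\<tau> i)"
    using sp unfolding sorting_perm_def by auto
  have "canon {..<N} F z = canon ?VG (\<lambda>S. F (S \<inter> {..<N})) z"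
    by (rule canon_restrict[symmetric]) auto
  also have "\<dots> = lsum (N+M) ?VG (\<lambda>S. F (S \<inter> {..<N})) z \<tau>"
    by (rule lsum_canon[symmetric]) (use bij srt F0 in auto)
  also have "\<dots> \<le> lsum (N+M) ?VG (gcut ?VG A) z \<tau>"
  proof (rule lsum_mono)
    show "\<forall>i j. i < j \<and> j < N+M \<longrightarrow> z (\<tau> j) \<le> z (\<tau> i)" using srt .
  next
    fix j assume j: "j < N + M - 1"
    let ?C = "\<tau> ` {..j}"
    have Csub: "?C \<subseteq> ?VG" using bij j unfolding bij_betw_def by auto
    have "?C = (?C \<inter> {..<N}) \<union> (?C \<inter> {N..<N+M})" using Csub by auto
    moreover have "F (?C \<inter> {..<N}) \<le> gcut ?VG A ((?C \<inter> {..<N}) \<union> (?C \<inter> {N..<N+M}))"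
      using Fle by auto
    ultimately show "F (?C \<inter> {..<N}) \<le> gcut ?VG A ?C" by simp
  next
    have "?VG \<inter> {..<N} = {..<N}" by auto
    thus "F (?VG \<inter> {..<N}) = gcut ?VG A ?VG" using FV gcut_all by simp
  qed
  also have "\<dots> = canon ?VG (gcut ?VG A) z"
    by (rule lsum_canon) (use bij srt gcut_empty in auto)
  also have "\<dots> = gQ1 ?VG A z" by (rule gQ1_canon[symmetric]) simp
  finally show ?thesis .
qed

lemma fam_inter:
  fixes F :: "nat set \<Rightarrow> real"
  assumes Fle: "\<forall>S\<subseteq>{..<N}. \<forall>T\<subseteq>{N..<N+M}. F S \<le> gcut {..<N+M} A (S \<union> T)"
    and Anonneg: "\<forall>u\<in>{..<N+M}. \<forall>v\<in>{..<N+M}. A u v \<ge> 0"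
    and S12: "S1 \<subseteq> S2" "S2 \<subseteq> {..<N}"
    and T1: "T1 \<subseteq> {N..<N+M}" "gcut {..<N+M} A (S1 \<union> T1) = F S1"
    and T2: "T2 \<subseteq> {N..<N+M}" "gcut {..<N+M} A (S2 \<union> T2) = F S2"
  shows "gcut {..<N+M} A (S1 \<union> (T1 \<inter> T2)) = F S1"
proof -
  let ?G = "gcut {..<N+M} A"
  have d: "S2 \<inter> T1 = {}" "S1 \<inter> T2 = {}" using S12 T1 T2 by (force, force)
  have i: "(S1 \<union> T1) \<inter> (S2 \<union> T2) = S1 \<union> (T1 \<inter> T2)" using S12 d by blast
  have u: "(S1 \<union> T1) \<union> (S2 \<union> T2) = S2 \<union> (T1 \<union> T2)" using S12 by auto
  have "?G ((S1 \<union> T1) \<union> (S2 \<union> T2)) + ?G ((S1 \<union> T1) \<inter> (S2 \<union> T2)) \<le> ?G (S1 \<union> T1) + ?G (S2 \<union> T2)"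
    by (rule gcut_submod) (use S12 T1 T2 Anonneg in auto)
  hence "?G (S2 \<union> (T1 \<union> T2)) + ?G (S1 \<union> (T1 \<inter> T2)) \<le> F S1 + F S2" using i u T1 T2 by simp
  moreover have "F S2 \<le> ?G (S2 \<union> (T1 \<union> T2))"
    by (rule Fle[rule_format]) (use S12 T1 T2 in auto)
  moreover have "F S1 \<le> ?G (S1 \<union> (T1 \<inter> T2))"
    by (rule Fle[rule_format]) (use S12 T1 T2 in auto)
  ultimately show ?thesis by linarith
qed

lemma fam_least:
  fixes F :: "nat set \<Rightarrow> real"
  assumes Fle: "\<forall>S\<subseteq>{..<N}. \<forall>T\<subseteq>{N..<N+M}. F S \<le> gcut {..<N+M} A (S \<union> T)"
    and Fex: "\<forall>S\<subseteq>{..<N}. \<exists>T\<subseteq>{N..<N+M}. gcut {..<N+M} A (S \<union> T) = F S"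
    and Anonneg: "\<forall>u\<in>{..<N+M}. \<forall>v\<in>{..<N+M}. A u v \<ge> 0"
    and S: "S \<subseteq> {..<N}"
  shows "\<exists>T0. T0 \<subseteq> {N..<N+M} \<and> gcut {..<N+M} A (S \<union> T0) = F S \<and>
     (\<forall>T. T \<subseteq> {N..<N+M} \<and> gcut {..<N+M} A (S \<union> T) = F S \<longrightarrow> T0 \<subseteq> T)"
proof -
  let ?P = "\<lambda>T. T \<subseteq> {N..<N+M} \<and> gcut {..<N+M} A (S \<union> T) = F S"
  obtain T1 where "?P T1" using Fex S by blast
  then obtain T0 where T0: "?P T0" and minc: "\<forall>T. ?P T \<longrightarrow> card T0 \<le> card T"
    using ex_has_least_nat[of ?P T1 card] by blast
  have "\<forall>T. ?P T \<longrightarrow> T0 \<subseteq> T"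
  proof (intro allI impI)
    fix T assume PT: "?P T"
    have "?P (T0 \<inter> T)"
      using fam_inter[OF Fle Anonneg order.refl S] T0 PT by auto
    hence "card T0 \<le> card (T0 \<inter> T)" using minc by blast
    moreover have "finite T0" using T0 finite_subset by blast
    ultimately have "T0 \<inter> T = T0"
      using card_subset_eq[of T0 "T0 \<inter> T"] card_mono[of T0 "T0 \<inter> T"] by (meson Int_lower1 card_seteq)
    thus "T0 \<subseteq> T" by blast
  qed
  thus ?thesis using T0 by blast
qed

lemma construct:
  fixes F :: "nat set \<Rightarrow> real" and x :: "nat \<Rightarrow> real"
  assumes Fle: "\<forall>S\<subseteq>{..<N}. \<forall>T\<subseteq>{N..<N+M}. F S \<le> gcut {..<N+M} A (S \<union> T)"
    and Fex: "\<forall>S\<subseteq>{..<N}. \<exists>T\<subseteq>{N..<N+M}. gcut {..<N+M} A (S \<union> T) = F S"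
    and Anonneg: "\<forall>u\<in>{..<N+M}. \<forall>v\<in>{..<N+M}. A u v \<ge> 0"
    and F0: "F {} = 0" and FV: "F {..<N} = 0" and N: "0 < N"
  shows "\<exists>xb. gQ1 {..<N+M} A (\<lambda>i. if i < N then x i else xb i) = canon {..<N} F x"
proof -
  let ?V = "{..<N}" and ?Vb = "{N..<N+M}" and ?VG = "{..<N+M}"
  let ?G = "gcut ?VG A"
  define X where "X = x ` ?V"
  have finX: "finite X" and neX: "X \<noteq> {}" using N by (auto simp: X_def)
  define mn where "mn = Min X"
  have mnX: "mn \<in> X" using finX neX by (simp add: mn_def)
  have mn_le: "\<And>t. t \<in> X \<Longrightarrow> mn \<le> t" using finX by (simp add: mn_def)
  define St where "St t = {u\<in>?V. t \<le> x u}" for t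
  have St_sub: "St t \<subseteq> ?V" for t by (auto simp: St_def)
  define Tm where "Tm S = (SOME T0. T0 \<subseteq> ?Vb \<and> ?G (S \<union> T0) = F S \<and>
     (\<forall>T. T \<subseteq> ?Vb \<and> ?G (S \<union> T) = F S \<longrightarrow> T0 \<subseteq> T))" for S
  have Tm: "Tm S \<subseteq> ?Vb \<and> ?G (S \<union> Tm S) = F S \<and>
     (\<forall>T. T \<subseteq> ?Vb \<and> ?G (S \<union> T) = F S \<longrightarrow> Tm S \<subseteq> T)" if "S \<subseteq> ?V" for S
    unfolding Tm_def by (rule someI_ex, rule fam_least[OF Fle Fex Anonneg that])
  have Tm_mono: "Tm S1 \<subseteq> Tm S2" if "S1 \<subseteq> S2" "S2 \<subseteq> ?V" for S1 S2
  proof -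
    have S1: "S1 \<subseteq> ?V" using that by auto
    have "?G (S1 \<union> (Tm S1 \<inter> Tm S2)) = F S1"
      using fam_inter[OF Fle Anonneg that, of "Tm S1" "Tm S2"] Tm[OF S1] Tm[OF that(2)] by blast
    moreover have "Tm S1 \<inter> Tm S2 \<subseteq> ?Vb" using Tm[OF S1] by blast
    ultimately have "Tm S1 \<subseteq> Tm S1 \<inter> Tm S2" using Tm[OF S1] by blast
    thus ?thesis by blast
  qed
  define Tt where "Tt t = (if t = mn then ?Vb else Tm (St t))" for t
  have St_mn: "St mn = ?V" using mn_le by (auto simp: St_def X_def)
  have Tt: "Tt t \<subseteq> ?Vb \<and> ?G (St t \<union> Tt t) = F (St t)" if "t \<in> X" for t
  proof (cases "t = mn")
    case True
    have "?V \<union> ?Vb = ?VG" by auto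
    thus ?thesis using True St_mn FV gcut_all[of ?VG A] by (simp add: Tt_def)
  next
    case False
    thus ?thesis using Tm[OF St_sub] by (simp add: Tt_def)
  qed
  have Tt_mono: "Tt t' \<subseteq> Tt t" if "t \<in> X" "t' \<in> X" "t \<le> t'" for t t'
  proof (cases "t = mn")
    case True
    thus ?thesis using Tt[OF that(2)] by (simp add: Tt_def)
  next
    case False
    hence "t' \<noteq> mn" using that mn_le by force
    moreover have "St t' \<subseteq> St t" using that(3) by (auto simp: St_def)
    ultimately show ?thesis using False Tm_mono[OF _ St_sub] by (simp add: Tt_def)
  qed
  define xb where "xb m = Max {t\<in>X. m \<in> Tt t}" for m
  define y where "y i = (if i < N then x i else xb i)" for i
  have ne_m: "mn \<in> {t\<in>X. m \<in> Tt t}" if "m \<in> ?Vb" for m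
    using that mnX by (simp add: Tt_def)
  have finm: "finite {t\<in>X. m \<in> Tt t}" for m using finX by simp
  have yX: "y u \<in> X" if "u \<in> ?VG" for u
  proof (cases "u < N")
    case True thus ?thesis by (simp add: y_def X_def)
  next
    case False
    hence "u \<in> ?Vb" using that by auto
    hence "xb u \<in> {t\<in>X. u \<in> Tt t}" unfolding xb_def using ne_m finm by (intro Max_in) auto
    thus ?thesis using False by (simp add: y_def)
  qed
  have lev: "{u\<in>?VG. t \<le> y u} = St t \<union> Tt t" if tX: "t \<in> X" for t
  proof (intro set_eqI iffI)
    fix u assume u: "u \<in> {u\<in>?VG. t \<le> y u}"
    show "u \<in> St t \<union> Tt t"
    proof (cases "u < N")
      case True thus ?thesis using u by (simp add: y_def St_def)
    next
      case False
      hence uVb: "u \<in> ?Vb" using u by auto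
      have "t \<le> Max {t\<in>X. u \<in> Tt t}" using u False by (simp add: y_def xb_def)
      then obtain t' where "t' \<in> X" "u \<in> Tt t'" "t \<le> t'"
        using Max_ge_iff[OF finm, of u t] ne_m[OF uVb] by blast
      thus ?thesis using Tt_mono[OF tX] by blast
    qed
  next
    fix u assume u: "u \<in> St t \<union> Tt t"
    show "u \<in> {u\<in>?VG. t \<le> y u}"
    proof (cases "u \<in> St t")
      case True thus ?thesis by (simp add: y_def St_def)
    next
      case False
      hence uT: "u \<in> Tt t" using u by blast
      hence uVb: "u \<in> ?Vb" using Tt[OF tX] by blast
      have "t \<le> Max {t\<in>X. u \<in> Tt t}"
        using Max_ge_iff[OF finm, of u t] ne_m[OF uVb] uT tX by blast
      thus ?thesis using uVb by (simp add: y_def xb_def)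
    qed
  qed
  have ge: "?G {u\<in>?VG. s \<le> y u} = F {u\<in>?V. s \<le> x u}" for s
  proof (cases "\<exists>t\<in>X. s \<le> t")
    case True
    define t0 where "t0 = Min {t\<in>X. s \<le> t}"
    have "t0 \<in> {t\<in>X. s \<le> t}" unfolding t0_def using finX True by (intro Min_in) auto
    hence t0: "t0 \<in> X" "s \<le> t0" by auto
    have t0le: "\<And>v. v \<in> X \<Longrightarrow> s \<le> v \<Longrightarrow> t0 \<le> v" using finX by (simp add: t0_def)
    have "{u\<in>?VG. s \<le> y u} = {u\<in>?VG. t0 \<le> y u}"
      using yX t0 t0le by (auto intro: order_trans)
    moreover have "{u\<in>?V. s \<le> x u} = St t0"
      using t0 t0le by (auto simp: St_def X_def intro: order_trans)
    ultimately show ?thesis using lev[OF t0(1)] Tt[OF t0(1)] by simp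
  next
    case False
    hence e1: "{u\<in>?VG. s \<le> y u} = {}" using yX by fastforce
    have e2: "{u\<in>?V. s \<le> x u} = {}" using False by (auto simp: X_def)
    show ?thesis unfolding e1 e2 using F0 gcut_empty by simp
  qed
  have gt: "?G {u\<in>?VG. s < y u} = F {u\<in>?V. s < x u}" for s
  proof -
    obtain s' where s': "\<forall>v\<in>X. s < v \<longleftrightarrow> s' \<le> v"
    proof (cases "\<exists>v\<in>X. s < v")
      case True
      define s' where "s' = Min {v\<in>X. s < v}"
      have "s' \<in> {v\<in>X. s < v}" unfolding s'_def using finX True by (intro Min_in) auto
      moreover have "\<And>v. v \<in> X \<Longrightarrow> s < v \<Longrightarrow> s' \<le> v" using finX by (simp add: s'_def)
      ultimately have "\<forall>v\<in>X. s < v \<longleftrightarrow> s' \<le> v" by force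
      thus ?thesis using that by blast
    next
      case False
      hence "\<forall>v\<in>X. s < v \<longleftrightarrow> s + 1 \<le> v" by force
      thus ?thesis using that by blast
    qed
    have "{u\<in>?VG. s < y u} = {u\<in>?VG. s' \<le> y u}" using yX s' by blast
    moreover have "{u\<in>?V. s < x u} = {u\<in>?V. s' \<le> x u}" using s' by (auto simp: X_def)
    ultimately show ?thesis using ge by simp
  qed
  have "gQ1 ?VG A y = canon ?VG ?G y" by (rule gQ1_canon) simp
  also have "\<dots> = (\<Sum>t\<in>X. t * (?G {u\<in>?VG. t \<le> y u} - ?G {u\<in>?VG. t < y u}))"
    by (rule canon_superset[OF finX]) (use yX in blast)
  also have "\<dots> = (\<Sum>t\<in>X. t * (F {u\<in>?V. t \<le> x u} - F {u\<in>?V. t < x u}))"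
    using ge gt by simp
  also have "\<dots> = canon ?V F x" by (simp add: canon_def X_def)
  finally show ?thesis unfolding y_def by blast
qed

lemma ind_canon:
  assumes "finite U" "S \<subseteq> U" "F {} = 0"
  shows "canon U F (\<lambda>i. if i \<in> S then 1 else 0) = F S"
proof -
  have "canon U F (\<lambda>i. if i \<in> S then 1 else 0) =
    (\<Sum>t\<in>{0,1}. t * (F {u\<in>U. t \<le> (if u \<in> S then 1 else 0)} - F {u\<in>U. t < (if u \<in> S then 1 else 0)}))"
    by (rule canon_superset) auto
  also have "\<dots> = F {u\<in>U. 1 \<le> (if u \<in> S then 1 else (0::real))} - F {u\<in>U. 1 < (if u \<in> S then 1 else (0::real))}"
    by simp
  also have "{u\<in>U. 1 \<le> (if u \<in> S then 1 else (0::real))} = S" using assms(2) by auto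
  also have "{u\<in>U. 1 < (if u \<in> S then 1 else (0::real))} = {}" by auto
  finally show ?thesis using assms(3) by simp
qed

lemma ii_to_i:
  fixes N M :: nat
    and E :: "nat set set" and mu :: "nat \<Rightarrow> real" and w :: "nat set \<Rightarrow> nat set \<Rightarrow> real"
    and A :: "nat \<Rightarrow> nat \<Rightarrow> real"
  assumes H: "submodular_hypergraph N E mu w"
    and An: "\<forall>u\<in>{..<N+M}. \<forall>v\<in>{..<N+M}. A u v \<ge> 0"
    and ii: "\<forall>x :: nat \<Rightarrow> real.
        \<exists>xb :: nat \<Rightarrow> real.
          hQ1 N E w x = gQ1 {..<N + M} A (\<lambda>i. if i < N then x i else xb i) \<and>
          (\<forall>xb' :: nat \<Rightarrow> real.
             gQ1 {..<N + M} A (\<lambda>i. if i < N then x i else xb i)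
               \<le> gQ1 {..<N + M} A (\<lambda>i. if i < N then x i else xb' i))"
    and S: "S \<subseteq> {..<N}"
  shows "hcut E w S = Min ((\<lambda>T. gcut {..<N + M} A (S \<union> T)) ` Pow {N..<N + M})"
proof -
  let ?V = "{..<N}" and ?Vb = "{N..<N+M}" and ?VG = "{..<N+M}"
  let ?G = "gcut ?VG A" and ?F = "hcut E w"
  have F0: "?F {} = 0" by (rule hcut_empty[OF H])
  have FV: "?F ?V = 0" by (rule hcut_all[OF H])
  define x where "x i = (if i \<in> S then 1 else (0::real))" for i
  obtain xb where xb1: "hQ1 N E w x = gQ1 ?VG A (\<lambda>i. if i < N then x i else xb i)"
    and xb2: "\<And>xb'. gQ1 ?VG A (\<lambda>i. if i < N then x i else xb i)
               \<le> gQ1 ?VG A (\<lambda>i. if i < N then x i else xb' i)"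
    using ii by blast
  have hx: "hQ1 N E w x = ?F S"
    using hQ1_canon[OF H] ind_canon[of ?V S ?F] S F0 unfolding x_def by simp
  have a: "?F S \<le> ?G (S \<union> T)" if T: "T \<subseteq> ?Vb" for T
  proof -
    have "gQ1 ?VG A (\<lambda>i. if i < N then x i else (if i \<in> T then 1 else 0))
        = canon ?VG ?G (\<lambda>i. if i < N then x i else (if i \<in> T then 1 else 0))"
      by (rule gQ1_canon) simp
    also have "\<dots> = canon ?VG ?G (\<lambda>i. if i \<in> S \<union> T then 1 else 0)"
      by (rule canon_cong) (use S T in \<open>auto simp: x_def\<close>)
    also have "\<dots> = ?G (S \<union> T)"
      by (rule ind_canon) (use S T gcut_empty in auto)
    finally show ?thesis using xb1 xb2 hx by metis
  qed
  have b: "\<exists>T\<subseteq>?Vb. ?G (S \<union> T) \<le> ?F S"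
  proof (cases "S = {} \<or> S = ?V")
    case True
    thus ?thesis
    proof
      assume "S = {}" thus ?thesis using F0 gcut_empty by (intro exI[of _ "{}"]) auto
    next
      assume SV: "S = ?V"
      have "?V \<union> ?Vb = ?VG" by auto
      thus ?thesis using SV FV gcut_all[of ?VG A] by (intro exI[of _ ?Vb]) auto
    qed
  next
    case False
    hence Sne: "S \<noteq> {}" and SV: "S \<noteq> ?V" by auto
    let ?K = "N + M"
    define y where "y i = (if i < N then x i else xb i)" for i
    obtain \<tau> where sp: "sorting_perm ?K y \<tau>" using sp_exists by blast
    have bij: "bij_betw \<tau> ?VG ?VG" and srt: "\<forall>i j. i < j \<and> j < ?K \<longrightarrow> y (\<tau> j) \<le> y (\<tau> i)"
      using sp unfolding sorting_perm_def by auto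
    have img: "\<tau> ` ?VG = ?VG" and inj: "inj_on \<tau> ?VG" using bij by (auto simp: bij_betw_def)
    define P1 where "P1 = {j. j < ?K \<and> \<tau> j \<in> S}"
    define P0 where "P0 = {j. j < ?K \<and> \<tau> j \<in> ?V - S}"
    have P1ne: "P1 \<noteq> {}"
    proof -
      obtain s where "s \<in> S" using Sne by blast
      hence "s \<in> \<tau> ` ?VG" using img S by auto
      thus ?thesis using \<open>s \<in> S\<close> by (auto simp: P1_def)
    qed
    have P0ne: "P0 \<noteq> {}"
    proof -
      obtain s where "s \<in> ?V - S" using SV S by blast
      hence "s \<in> \<tau> ` ?VG" using img by auto
      thus ?thesis using \<open>s \<in> ?V - S\<close> by (auto simp: P0_def)
    qed
    have finP: "finite P1" "finite P0" by (auto simp: P1_def P0_def)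
    define a where "a = Max P1"
    define b where "b = Min P0"
    have aP: "a \<in> P1" using finP P1ne by (simp add: a_def)
    have bP: "b \<in> P0" using finP P0ne by (simp add: b_def)
    have a_max: "\<And>j. j \<in> P1 \<Longrightarrow> j \<le> a" using finP by (simp add: a_def)
    have b_min: "\<And>j. j \<in> P0 \<Longrightarrow> b \<le> j" using finP by (simp add: b_def)
    have ya: "y (\<tau> a) = 1" using aP S by (auto simp: P1_def y_def x_def)
    have yb: "y (\<tau> b) = 0" using bP by (auto simp: P0_def y_def x_def)
    have bK: "b < ?K" using bP by (simp add: P0_def)
    have ab: "a < b"
    proof (rule ccontr)
      assume "\<not> a < b"
      hence "b \<le> a" by simp
      moreover have "b \<noteq> a" using aP bP by (auto simp: P1_def P0_def)
      ultimately have "b < a" by simp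
      hence "y (\<tau> a) \<le> y (\<tau> b)" using srt aP by (auto simp: P1_def)
      thus False using ya yb by simp
    qed
    have lev: "\<tau> ` {..j} \<inter> ?V = S" if j: "j \<in> {a..<b}" for j
    proof (intro set_eqI iffI)
      fix u assume u: "u \<in> \<tau> ` {..j} \<inter> ?V"
      then obtain i where i: "i \<le> j" "u = \<tau> i" by auto
      show "u \<in> S"
      proof (rule ccontr)
        assume "u \<notin> S"
        hence "i \<in> P0" using u i j bK by (auto simp: P0_def)
        thus False using b_min i j by force
      qed
    next
      fix u assume u: "u \<in> S"
      hence "u \<in> \<tau> ` ?VG" using img S by auto
      then obtain i where i: "i < ?K" "u = \<tau> i" by auto
      hence "i \<in> P1" using u by (simp add: P1_def)
      hence "i \<le> j" using a_max j by force
      thus "u \<in> \<tau> ` {..j} \<inter> ?V" using i u S by auto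
    qed
    let ?d = "\<lambda>j. y (\<tau> j) - y (\<tau> (Suc j))"
    have d_nonneg: "?d j \<ge> 0" if "j < ?K - 1" for j using srt that by auto
    have Gnn: "?G (\<tau> ` {..j}) \<ge> 0" if "j < ?K" for j
      by (rule gcut_nonneg) (use img that An in auto)
    have dsum: "(\<Sum>j\<in>{a..<b}. ?d j) = 1"
    proof -
      have "(\<Sum>j\<in>{a..<b}. (- y (\<tau> (Suc j))) - (- y (\<tau> j))) = (- y (\<tau> b)) - (- y (\<tau> a))"
        by (rule sum_Suc_diff'[of a b "\<lambda>j. - y (\<tau> j)"]) (use ab in simp)
      thus ?thesis using ya yb by simp
    qed
    have finab: "finite ((\<lambda>j. ?G (\<tau> ` {..j})) ` {a..<b})" by simp
    have neab: "(\<lambda>j. ?G (\<tau> ` {..j})) ` {a..<b} \<noteq> {}" using ab by simp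
    obtain j0 where j0: "j0 \<in> {a..<b}" "?G (\<tau> ` {..j0}) = Min ((\<lambda>j. ?G (\<tau> ` {..j})) ` {a..<b})"
      using Min_in[OF finab neab] by auto
    have j0min: "?G (\<tau> ` {..j0}) \<le> ?G (\<tau> ` {..j})" if "j \<in> {a..<b}" for j
      using j0(2) Min_le[OF finab] that by simp
    have sub: "{a..<b} \<subseteq> {..<?K - 1}" using bK by auto
    have "?G (\<tau> ` {..j0}) = (\<Sum>j\<in>{a..<b}. ?G (\<tau> ` {..j0}) * ?d j)"
      using dsum by (simp add: sum_distrib_left[symmetric])
    also have "\<dots> \<le> (\<Sum>j\<in>{a..<b}. ?G (\<tau> ` {..j}) * ?d j)"
      by (rule sum_mono, rule mult_right_mono) (use j0min d_nonneg sub in auto)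
    also have "\<dots> \<le> (\<Sum>j<?K - 1. ?G (\<tau> ` {..j}) * ?d j)"
      by (rule sum_mono2) (use sub Gnn d_nonneg in auto)
    also have "\<dots> = lsum ?K ?VG ?G y \<tau>"
      unfolding lsum_def using gcut_all[of ?VG A] by simp
    also have "\<dots> = canon ?VG ?G y"
      by (rule lsum_canon) (use bij srt gcut_empty in auto)
    also have "\<dots> = gQ1 ?VG A y" by (rule gQ1_canon[symmetric]) simp
    also have "\<dots> = ?F S" using xb1 hx by (simp add: y_def[abs_def])
    finally have le: "?G (\<tau> ` {..j0}) \<le> ?F S" .
    have "\<tau> ` {..j0} \<subseteq> ?VG" using img j0(1) bK by auto
    hence "\<tau> ` {..j0} = (\<tau> ` {..j0} \<inter> ?V) \<union> (\<tau> ` {..j0} \<inter> ?Vb)" by auto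
    hence "\<tau> ` {..j0} = S \<union> (\<tau> ` {..j0} \<inter> ?Vb)" using lev[OF j0(1)] by simp
    thus ?thesis using le by (intro exI[of _ "\<tau> ` {..j0} \<inter> ?Vb"]) auto
  qed
  then obtain T where T: "T \<subseteq> ?Vb" "?G (S \<union> T) \<le> ?F S" by blast
  have eq: "?G (S \<union> T) = ?F S" using a[OF T(1)] T(2) by simp
  have mem: "?F S \<in> (\<lambda>T. ?G (S \<union> T)) ` Pow ?Vb"
    using eq T(1) by (metis PowI image_eqI)
  show ?thesis
    by (rule Min_eqI[symmetric]) (use a mem in auto)
qed

theorem theorem1:
  fixes N M :: nat
    and E :: "nat set set" and mu :: "nat \<Rightarrow> real" and w :: "nat set \<Rightarrow> nat set \<Rightarrow> real"
    and A :: "nat \<Rightarrow> nat \<Rightarrow> real"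
  assumes H: "submodular_hypergraph N E mu w"
    and A_nonneg: "\<forall>u<N + M. \<forall>v<N + M. A u v \<ge> 0"
  shows "(\<forall>S\<subseteq>{..<N}. hcut E w S =
            Min ((\<lambda>T. gcut {..<N + M} A (S \<union> T)) ` Pow {N..<N + M}))
     \<longleftrightarrow>
     (\<forall>x :: nat \<Rightarrow> real.
        \<exists>xb :: nat \<Rightarrow> real.
          hQ1 N E w x = gQ1 {..<N + M} A (\<lambda>i. if i < N then x i else xb i) \<and>
          (\<forall>xb' :: nat \<Rightarrow> real.
             gQ1 {..<N + M} A (\<lambda>i. if i < N then x i else xb i)
               \<le> gQ1 {..<N + M} A (\<lambda>i. if i < N then x i else xb' i)))"
proof -
  have An: "\<forall>u\<in>{..<N+M}. \<forall>v\<in>{..<N+M}. A u v \<ge> 0" using A_nonneg by simp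
  let ?F = "hcut E w" and ?G = "gcut {..<N + M} A"
  have F0: "?F {} = 0" by (rule hcut_empty[OF H])
  have FV: "?F {..<N} = 0" by (rule hcut_all[OF H])
  show ?thesis
  proof
    assume i: "\<forall>S\<subseteq>{..<N}. hcut E w S = Min ((\<lambda>T. gcut {..<N + M} A (S \<union> T)) ` Pow {N..<N + M})"
    have fin: "finite ((\<lambda>T. ?G (S \<union> T)) ` Pow {N..<N + M})" for S by simp
    have ne: "(\<lambda>T. ?G (S \<union> T)) ` Pow {N..<N + M} \<noteq> {}" for S by blast
    have Fle: "\<forall>S\<subseteq>{..<N}. \<forall>T\<subseteq>{N..<N+M}. ?F S \<le> ?G (S \<union> T)"
    proof (intro allI impI)
      fix S T assume "S \<subseteq> {..<N}" "T \<subseteq> {N..<N+M}"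
      thus "?F S \<le> ?G (S \<union> T)" using i Min_le[OF fin[of S]] by auto
    qed
    have Fex: "\<forall>S\<subseteq>{..<N}. \<exists>T\<subseteq>{N..<N+M}. ?G (S \<union> T) = ?F S"
    proof (intro allI impI)
      fix S assume S: "S \<subseteq> {..<N}"
      from Min_in[OF fin[of S] ne[of S]] obtain T where "T \<subseteq> {N..<N+M}"
        "?G (S \<union> T) = Min ((\<lambda>T. ?G (S \<union> T)) ` Pow {N..<N + M})" by auto
      thus "\<exists>T\<subseteq>{N..<N+M}. ?G (S \<union> T) = ?F S" using i S by auto
    qed
    have low: "hQ1 N E w x \<le> gQ1 {..<N + M} A (\<lambda>i. if i < N then x i else xb' i)" for x xb'
    proof -
      have "hQ1 N E w x = canon {..<N} ?F x" by (rule hQ1_canon[OF H])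
      also have "\<dots> = canon {..<N} ?F (\<lambda>i. if i < N then x i else xb' i)"
        by (rule canon_cong) simp
      also have "\<dots> \<le> gQ1 {..<N + M} A (\<lambda>i. if i < N then x i else xb' i)"
        by (rule lower_bound[OF Fle F0 FV])
      finally show ?thesis .
    qed
    show "\<forall>x :: nat \<Rightarrow> real.
        \<exists>xb :: nat \<Rightarrow> real.
          hQ1 N E w x = gQ1 {..<N + M} A (\<lambda>i. if i < N then x i else xb i) \<and>
          (\<forall>xb' :: nat \<Rightarrow> real.
             gQ1 {..<N + M} A (\<lambda>i. if i < N then x i else xb i)
               \<le> gQ1 {..<N + M} A (\<lambda>i. if i < N then x i else xb' i))"
    proof
      fix x :: "nat \<Rightarrow> real"
      obtain xb where xb: "gQ1 {..<N + M} A (\<lambda>i. if i < N then x i else xb i) = hQ1 N E w x"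
      proof (cases "N = 0")
        case True
        have g0: "gQ1 {..<N + M} A (\<lambda>i. if i < N then x i else (\<lambda>_. 0) i) = 0"
          using True by (simp add: gQ1_def)
        have "hQ1 N E w x = canon {..<N} ?F x" by (rule hQ1_canon[OF H])
        also have "\<dots> = 0" using True by (simp add: canon_def)
        finally have "gQ1 {..<N + M} A (\<lambda>i. if i < N then x i else (\<lambda>_. 0) i) = hQ1 N E w x"
          using g0 by simp
        thus ?thesis by (rule that)
      next
        case False
        then obtain xb where "gQ1 {..<N + M} A (\<lambda>i. if i < N then x i else xb i) = canon {..<N} ?F x"
          using construct[OF Fle Fex An F0 FV] by blast
        thus ?thesis using hQ1_canon[OF H, of x] by (intro that) simp
      qed
      thus "\<exists>xb :: nat \<Rightarrow> real.
          hQ1 N E w x = gQ1 {..<N + M} A (\<lambda>i. if i < N then x i else xb i) \<and>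
          (\<forall>xb' :: nat \<Rightarrow> real.
             gQ1 {..<N + M} A (\<lambda>i. if i < N then x i else xb i)
               \<le> gQ1 {..<N + M} A (\<lambda>i. if i < N then x i else xb' i))"
        using low by (intro exI[of _ xb]) simp
    qed
  next
    assume ii: "\<forall>x :: nat \<Rightarrow> real.
        \<exists>xb :: nat \<Rightarrow> real.
          hQ1 N E w x = gQ1 {..<N + M} A (\<lambda>i. if i < N then x i else xb i) \<and>
          (\<forall>xb' :: nat \<Rightarrow> real.
             gQ1 {..<N + M} A (\<lambda>i. if i < N then x i else xb i)
               \<le> gQ1 {..<N + M} A (\<lambda>i. if i < N then x i else xb' i))"
    show "\<forall>S\<subseteq>{..<N}. hcut E w S = Min ((\<lambda>T. gcut {..<N + M} A (S \<union> T)) ` Pow {N..<N + M})"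
      using ii_to_i[OF H An ii] by blast
  qed
qed

end
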